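(* Let $N>2$, $1<p<N$, and assume (H1)–(H4). For $a>0$ let $v_a$ be the solution on $[0,T]$ of $$(|v'(t)|^{p-2}v'(t))'+h(t)f(v(t))=0,\qquad v(0)=0,\ v'(0)=a.$$ Then for all sufficiently large $a$, $v_a$ has a first local maximum $M_a\in(0,T)$ (i.e. $v_a'(M_a)=0$ and $v_a'>0$ on $[0,M_a)$), and $M_a\to 0$ and $v_a(M_a)\to\infty$ as $a\to\infty$.
   Context: Standing hypotheses. $f:\mathbb{R}\setminus\{0\}\to\mathbb{R}$ is odd and locally Lipschitz, and: (H1) there is a locally Lipschitz $g_1:\mathbb{R}\to\mathbb{R}$ and $l>p-1$ with $f(u)=|u|^{l-1}u+g_1(u)$ for all large $|u|$, and $\lim_{u\to\infty}|g_1(u)|/|u|^l=0$; (H2) there is a locally Lipschitz $g_2:\mathbb{R}\to\mathbb{R}$ with $g_2(0)=0$ and $0<m<1$ such that $f(u)=-\frac{1}{|u|^{m-1}u}+g_2(u)$ for all small $|u|\neq 0$; (H3) $f$ has a unique positive zero $\beta$, with $f<0$ on $(0,\beta)$ and $f>0$ on $(\beta,\infty)$; (H4) $K>0$ and $K'$ are continuous on $[R,\infty)$ (for a fixed $R>0$), $\frac{rK'(r)}{K(r)}>-\frac{(N-1)p}{p-1}$ on $[R,\infty)$, and there are constants $K_0,K_1>0$ with $\frac{K_0}{r^{\alpha}}\le K(r)\le \frac{K_1}{r^{\alpha_1}}$ on $[R,\infty)$, where $N+\frac{m(N-p)}{p-1}<\alpha_1\le\alpha<2(N-1)$. Notation: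 $T=R^{\frac{p-N}{p-1}}$ and, for $0<t\le T$, $h(t)=\left(\frac{N-p}{p-1}\right)^{-p}t^{\frac{p(N-1)}{p-N}}K\!\left(t^{\frac{p-1}{p-N}}\right)>0$. A solution of the initial value problem on an interval $[0,d]$ means $v\in C^1[0,d]$ such that $t\mapsto h(t)f(v(t))$ is integrable on $(0,t)$ for each $t\le d$ and $|v'(t)|^{p-2}v'(t)=a^{p-1}-\int_0^t h(s)f(v(s))\,ds$, $v(0)=0$; it exists uniquely on $[0,T]$ for each $a>0$. *)

theory Defs
  imports "HOL-Analysis.Analysis"
begin

definition loc_lipschitz_on :: "real set \<Rightarrow> (real \<Rightarrow> real) \<Rightarrow> bool" where
  "loc_lipschitz_on S g \<longleftrightarrow>
     (\<forall>x\<in>S. \<exists>e>0. \<exists>L. \<forall>y\<in>ball x e \<inter> S. \<forall>z\<in>ball x e \<inter> S. \<bar>g y - g z\<bar> \<le> L * \<bar>y - z\<bar>)"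

definition phi_p :: "real \<Rightarrow> real \<Rightarrow> real" where
  "phi_p p x = \<bar>x\<bar> powr (p - 2) * x"

definition hfun :: "nat \<Rightarrow> real \<Rightarrow> (real \<Rightarrow> real) \<Rightarrow> real \<Rightarrow> real" where
  "hfun N p K t = ((real N - p) / (p - 1)) powr (- p) * t powr (p * (real N - 1) / (p - real N))
                  * K (t powr ((p - 1) / (p - real N)))"

definition is_solution ::
  "(real \<Rightarrow> real) \<Rightarrow> (real \<Rightarrow> real) \<Rightarrow> real \<Rightarrow> real \<Rightarrow> real \<Rightarrow> (real \<Rightarrow> real) \<Rightarrow> (real \<Rightarrow> real) \<Rightarrow> bool"
  where
  "is_solution h f p a d v v' \<longleftrightarrow>
     continuous_on {0..d} v' \<and>
     (\<forall>t\<in>{0..d}. (v has_real_derivative v' t) (at t within {0..d})) \<and>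
     v 0 = 0 \<and>
     (\<forall>t\<in>{0..d}. (\<lambda>s. h s * f (v s)) integrable_on {0..t} \<and>
        phi_p p (v' t) = a powr (p - 1) - integral {0..t} (\<lambda>s. h s * f (v s)))"

end

theory Submission
  imports Defs
begin

lemma phi_pos: "1 < p \<Longrightarrow> x > 0 \<Longrightarrow> phi_p p x = x powr (p - 1)"
proof -
  assume "1 < p" "x > 0"
  then have "phi_p p x = x powr (p - 2) * x powr 1" unfolding phi_p_def by simp
  also have "\<dots> = x powr (p - 2 + 1)" by (rule powr_add[symmetric])
  also have "\<dots> = x powr (p - 1)" by simp
  finally show ?thesis .
qed

lemma phi_nonpos: "x \<le> 0 \<Longrightarrow> phi_p p x \<le> 0"
  unfolding phi_p_def by (simp add: mult_nonneg_nonpos)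

lemma phi_pos_iff: "1 < p \<Longrightarrow> phi_p p x > 0 \<longleftrightarrow> x > 0"
  using phi_pos[of p x] phi_nonpos[of x p] by (cases "x > 0") auto

lemma mvt_within:
  fixes v v' :: "real \<Rightarrow> real"
  assumes "\<forall>t\<in>{0..d}. (v has_real_derivative v' t) (at t within {0..d})"
    and "0 \<le> x" "x < y" "y \<le> d"
  shows "\<exists>\<xi>\<in>{x<..<y}. v y - v x = v' \<xi> * (y - x)"
proof -
  have "\<exists>\<xi>\<in>{x<..<y}. v y - v x = (\<lambda>h. h * v' \<xi>) (y - x)"
  proof (rule mvt_simple[OF assms(3)])
    fix t assume "x \<le> t" "t \<le> y"
    then have "(v has_real_derivative v' t) (at t within {0..d})" using assms by auto
    then have "(v has_real_derivative v' t) (at t within {x..y})"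
      by (rule DERIV_subset) (use assms in auto)
    then show "(v has_derivative (\<lambda>h. h * v' t)) (at t within {x..y})"
      unfolding has_field_derivative_def by (simp add: mult.commute[of _ "v' t"] cong: rev_conj_cong)
  qed
  then show ?thesis by (auto simp: mult.commute)
qed

lemma strict_mono_from_pos_deriv:
  fixes v v' :: "real \<Rightarrow> real"
  assumes "\<forall>t\<in>{0..d}. (v has_real_derivative v' t) (at t within {0..d})"
    and "\<forall>t\<in>{0..<e}. v' t > 0" "e \<le> d"
    and "0 \<le> x" "x < y" "y \<le> e"
  shows "v x < v y"
proof -
  obtain \<xi> where "\<xi>\<in>{x<..<y}" "v y - v x = v' \<xi> * (y - x)"
    using mvt_within[OF assms(1) assms(4,5)] assms(3,6) by auto
  moreover have "v' \<xi> > 0" using assms \<open>\<xi>\<in>{x<..<y}\<close> by auto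
  moreover have "y - x > 0" using assms by simp
  ultimately show ?thesis using mult_pos_pos[of "v' \<xi>" "y - x"] by linarith
qed

lemma powr_gt_of_gt_root:
  fixes a C q :: real
  assumes "q > 0" "a > max 0 (\<bar>C\<bar> powr (1/q))"
  shows "a powr q > C"
proof -
  have "a > \<bar>C\<bar> powr (1/q)" using assms by auto
  then have "a powr q > (\<bar>C\<bar> powr (1/q)) powr q"
    by (intro powr_less_mono2) (use assms in auto)
  also have "(\<bar>C\<bar> powr (1/q)) powr q = \<bar>C\<bar>"
    using assms by (cases "C = 0") (auto simp: powr_powr)
  finally show ?thesis by linarith
qed


locale setting =
  fixes p l \<beta> T Ch \<gamma> :: real and h f :: "real \<Rightarrow> real" and v v' :: "real \<Rightarrow> real \<Rightarrow> real"
  assumes p: "1 < p" and T: "T > 0"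
  and h0: "h 0 = 0" and hpos: "\<forall>t\<in>{0<..T}. h t > 0"
  and Ch: "Ch > 0" "\<gamma> > -1" "\<forall>t\<in>{0<..T}. h t \<le> Ch * t powr \<gamma>"
  and hlow: "\<And>x y. 0 < x \<Longrightarrow> x \<le> y \<Longrightarrow> y \<le> T \<Longrightarrow> \<exists>c>0. \<forall>t\<in>{x..y}. c \<le> h t"
  and beta: "\<beta> > 0" "f \<beta> = 0" "\<forall>u. 0<u \<and> u<\<beta> \<longrightarrow> f u < 0" "\<forall>u>\<beta>. f u > 0"
  and fcont: "continuous_on {0<..} f"
  and fbig: "l > p - 1" "\<exists>U. \<forall>u\<ge>U. f u \<ge> u powr l / 2"
  and sol: "\<forall>a>0. is_solution h f p a T (v a) (v' a)"
begin

definition I where "I a t = integral {0..t} (\<lambda>s. h s * f (v a s))"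

lemma fbound: "\<exists>C\<ge>0. \<forall>u\<in>{0<..B}. f u \<le> C"
proof (cases "B < \<beta>")
  case True
  then show ?thesis using beta by (intro exI[of _ 0]) force
next
  case False
  have "continuous_on {\<beta>..B} f" by (rule continuous_on_subset[OF fcont]) (use beta(1) in auto)
  then obtain x where x: "x \<in> {\<beta>..B}" "\<forall>y\<in>{\<beta>..B}. f y \<le> f x"
    using continuous_attains_sup[of "{\<beta>..B}" f] False by auto
  show ?thesis
  proof (intro exI[of _ "max 0 (f x)"] conjI ballI)
    fix u assume u: "u \<in> {0<..B}"
    show "f u \<le> max 0 (f x)"
    proof (cases "u < \<beta>")
      case True then show ?thesis using beta u by (smt (verit) greaterThanAtMost_iff)
    next
      case False
      then have "f u \<le> f x" using x(2) u by auto
      then show ?thesis by auto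
    qed
  qed auto
qed

lemma sol_cont: "a > 0 \<Longrightarrow> continuous_on {0..T} (v' a)"
  using sol unfolding is_solution_def by auto
lemma sol_deriv: "a > 0 \<Longrightarrow> \<forall>t\<in>{0..T}. (v a has_real_derivative v' a t) (at t within {0..T})"
  using sol unfolding is_solution_def by auto
lemma sol_0: "a > 0 \<Longrightarrow> v a 0 = 0"
  using sol unfolding is_solution_def by auto
lemma sol_int: "a > 0 \<Longrightarrow> t \<in> {0..T} \<Longrightarrow> (\<lambda>s. h s * f (v a s)) integrable_on {0..t}"
  using sol unfolding is_solution_def by auto
lemma sol_phi: "a > 0 \<Longrightarrow> t \<in> {0..T} \<Longrightarrow> phi_p p (v' a t) = a powr (p - 1) - I a t"
  using sol unfolding is_solution_def I_def by auto

lemma v'0: "a > 0 \<Longrightarrow> v' a 0 > 0"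
  using sol_phi[of a 0] T p phi_pos_iff[OF p, of "v' a 0"] by (simp add: I_def)

lemma Icomb: "a > 0 \<Longrightarrow> 0 \<le> x \<Longrightarrow> x \<le> y \<Longrightarrow> y \<le> T \<Longrightarrow>
   I a y = I a x + integral {x..y} (\<lambda>s. h s * f (v a s))"
  unfolding I_def using Henstock_Kurzweil_Integration.integral_combine[where a=0 and c=x and b=y and f="\<lambda>s. h s * f (v a s)"] sol_int[of a y] by auto

lemma int_sub: "a > 0 \<Longrightarrow> 0 \<le> x \<Longrightarrow> x \<le> y \<Longrightarrow> y \<le> T \<Longrightarrow>
   (\<lambda>s. h s * f (v a s)) integrable_on {x..y}"
  using integrable_subinterval_real[OF sol_int[of a y]] by auto

lemma lemC:
  assumes a: "a > 0" and b: "0 \<le> b" "b \<le> T" and C: "C \<ge> 0" and f: "\<forall>s\<in>{0<..b}. f (v a s) \<le> C"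
  shows "I a b \<le> C * Ch * (b powr (\<gamma> + 1) / (\<gamma> + 1))"
proof -
  have G: "((\<lambda>s. (C * Ch) * s powr \<gamma>) has_integral (C * Ch) * (b powr (\<gamma> + 1) / (\<gamma> + 1))) {0..b}"
    by (rule has_integral_mult_right, rule has_integral_powr_from_0) (use Ch b in auto)
  have "I a b \<le> integral {0..b} (\<lambda>s. (C * Ch) * s powr \<gamma>)"
    unfolding I_def
  proof (rule integral_le)
    show "(\<lambda>s. h s * f (v a s)) integrable_on {0..b}" using sol_int[OF a] b by auto
    show "(\<lambda>s. (C * Ch) * s powr \<gamma>) integrable_on {0..b}" using G by blast
    fix s assume s: "s \<in> {0..b}"
    show "h s * f (v a s) \<le> (C * Ch) * s powr \<gamma>"
    proof (cases "s = 0")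
      case True then show ?thesis by (simp add: h0)
    next
      case False
      then have s0: "s \<in> {0<..T}" "s \<in> {0<..b}" using s b by auto
      have hs: "h s > 0" using hpos s0 by auto
      have "h s * f (v a s) \<le> h s * C"
        using hs s0 f by (intro mult_left_mono) auto
      also have "\<dots> \<le> (Ch * s powr \<gamma>) * C"
        using Ch s0 C by (intro mult_right_mono) auto
      finally show ?thesis by (simp add: algebra_simps)
    qed
  qed
  also have "\<dots> = C * Ch * (b powr (\<gamma> + 1) / (\<gamma> + 1))" using G by blast
  finally show ?thesis .
qed

end

context setting
begin

lemma mono_v:
  assumes a: "a > 0" and pos: "\<forall>t\<in>{0..<e}. v' a t > 0" and e: "e \<le> T"
    and xy: "0 \<le> x" "x < y" "y \<le> e"
  shows "v a x < v a y"
  by (rule strict_mono_from_pos_deriv[OF sol_deriv[OF a] pos e xy])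

lemma lemB:
  assumes a: "a > 0" and M: "0 < M" "M \<le> T" "v' a M = 0" "\<forall>t\<in>{0..<M}. v' a t > 0"
    and C: "C \<ge> 0" "\<forall>u\<in>{0<..B}. f u \<le> C" and B: "v a M \<le> B"
  shows "a powr (p - 1) \<le> C * Ch * (T powr (\<gamma> + 1) / (\<gamma> + 1))"
proof -
  have "\<forall>s\<in>{0<..M}. f (v a s) \<le> C"
  proof
    fix s assume s: "s \<in> {0<..M}"
    have "v a 0 < v a s" using mono_v[OF a M(4) M(2), of 0 s] s by auto
    moreover have "v a s \<le> v a M"
      using mono_v[OF a M(4) M(2), of s M] s by (cases "s = M") auto
    ultimately show "f (v a s) \<le> C" using C B sol_0[OF a] by auto
  qed
  then have "I a M \<le> C * Ch * (M powr (\<gamma> + 1) / (\<gamma> + 1))"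
    using lemC[OF a _ M(2) C(1)] M by auto
  also have "\<dots> \<le> C * Ch * (T powr (\<gamma> + 1) / (\<gamma> + 1))"
    using C Ch M by (intro mult_left_mono divide_right_mono powr_mono2) auto
  finally have "I a M \<le> C * Ch * (T powr (\<gamma> + 1) / (\<gamma> + 1))" .
  moreover have "phi_p p (v' a M) = 0" using M(3) by (simp add: phi_p_def)
  ultimately show ?thesis using sol_phi[OF a, of M] M by auto
qed

end

context setting
begin

lemma lemA_core:
  assumes a: "a > 0" and eps: "0 < \<epsilon>" "\<epsilon> \<le> T" and a_big: "4*\<beta>/\<epsilon> \<le> a"
    and pos: "\<forall>t\<in>{0..\<epsilon>}. v' a t > 0"
    and hmin: "hmin > 0" "\<forall>t\<in>{\<epsilon>/2..\<epsilon>}. hmin \<le> h t"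
    and U1: "\<forall>u\<ge>U1. f u \<ge> u powr l / 2"
    and Y0: "Y0 \<ge> U1" "Y0 > 0" "\<forall>Y>Y0. (4*Y/\<epsilon>) powr (p-1) \<le> hmin * (Y powr l / 2) * (\<epsilon>/2)"
    and Cf: "Cf \<ge> 0" "\<forall>u\<in>{0<..Y0}. f u \<le> Cf"
  shows "a powr (p-1) \<le> Cf*Ch*((\<epsilon>/2) powr (\<gamma>+1)/(\<gamma>+1)) + (4*Y0/\<epsilon>) powr (p-1)"
proof -
  define V where "V = v a"
  define V' where "V' = v' a"
  define F where "F = (\<lambda>s. h s * f (V s))"
  have pos': "\<forall>t\<in>{0..<\<epsilon>}. V' t > 0" using pos unfolding V'_def by auto
  have mono: "V x < V y" if "0 \<le> x" "x < y" "y \<le> \<epsilon>" for x y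
    using mono_v[OF a pos'[unfolded V'_def] eps(2) that] unfolding V_def .
  have monole: "V x \<le> V y" if "0 \<le> x" "x \<le> y" "y \<le> \<epsilon>" for x y
    using mono[of x y] that by (cases "x = y") auto
  have V0: "V 0 = 0" using sol_0[OF a] unfolding V_def .
  have Vpos: "V s > 0" if "0 < s" "s \<le> \<epsilon>" for s using mono[of 0 s] that V0 by auto
  have Phi: "phi_p p (V' t) = a powr (p - 1) - I a t" if "t \<in> {0..\<epsilon>}" for t
    using sol_phi[OF a, of t] that eps unfolding V'_def by auto
  have PhiV: "phi_p p (V' t) = V' t powr (p - 1)" if "t \<in> {0..\<epsilon>}" for t
    using phi_pos[OF p] pos that unfolding V'_def by auto
  have der: "\<forall>t\<in>{0..T}. (V has_real_derivative V' t) (at t within {0..T})"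
    using sol_deriv[OF a] unfolding V_def V'_def .
  have fnn: "f u \<ge> 0" if "u \<ge> \<beta>" for u
    using beta that by (cases "u = \<beta>") (auto simp: less_imp_le)
  have Ieq: "I a y = I a x + integral {x..y} F" if "0 \<le> x" "x \<le> y" "y \<le> T" for x y
    using Icomb[OF a that] unfolding F_def V_def .
  have Fint: "F integrable_on {x..y}" if "0 \<le> x" "x \<le> y" "y \<le> T" for x y
    using int_sub[OF a that] unfolding F_def V_def .
  have pm1: "p - 1 > 0" using p by simp
  have l0: "l > 0" using fbig(1) p by simp
  define q1 where "q1 = \<epsilon>/4"
  define q2 where "q2 = \<epsilon>/2"
  have q: "0 < q1" "q1 < q2" "q2 < \<epsilon>" using eps unfolding q1_def q2_def by auto
  have Vq1: "V q1 \<ge> \<beta>"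
  proof (rule ccontr)
    assume nb: "\<not> V q1 \<ge> \<beta>"
    have ge: "V' s \<ge> a" if s: "0 < s" "s \<le> q1" for s
    proof -
      have "\<forall>r\<in>{0<..s}. f (V r) \<le> 0"
      proof
        fix r assume r: "r \<in> {0<..s}"
        have "0 < V r" using Vpos[of r] r s q by auto
        moreover have "V r \<le> V q1" using monole[of r q1] r s q by auto
        ultimately show "f (V r) \<le> 0" using beta nb by (smt (verit))
      qed
      then have "I a s \<le> 0" using lemC[OF a, of s 0] s q eps unfolding V_def by auto
      then have "phi_p p (V' s) \<ge> a powr (p - 1)" using Phi[of s] s q by auto
      then have "V' s powr (p - 1) \<ge> a powr (p - 1)" using PhiV[of s] s q by auto
      moreover have "V' s > 0" using pos' s q by auto
      ultimately show "V' s \<ge> a"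
        using powr_less_mono2[OF pm1, of "V' s" a] by (meson leI less_imp_le not_less)
    qed
    obtain \<xi> where \<xi>: "\<xi> \<in> {0<..<q1}" "V q1 - V 0 = V' \<xi> * (q1 - 0)"
      using mvt_within[OF der, of 0 q1] q eps by auto
    have "V' \<xi> * q1 \<ge> a * q1" using ge[of \<xi>] \<xi> q by (intro mult_right_mono) auto
    then have "V q1 \<ge> a * q1" using \<xi> V0 by auto
    moreover have "a * q1 \<ge> \<beta>" using a_big eps unfolding q1_def by (auto simp: field_simps)
    ultimately show False using nb by auto
  qed
  have Vge: "V r \<ge> \<beta>" if "q1 \<le> r" "r \<le> \<epsilon>" for r using monole[of q1 r] that q Vq1 by auto
  define Y where "Y = V q2"
  have Y0': "Y > 0" using Vpos[of q2] q unfolding Y_def by auto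
  have Phiq2: "phi_p p (V' q2) \<le> (4 * Y / \<epsilon>) powr (p - 1)"
  proof -
    obtain \<xi> where \<xi>: "\<xi> \<in> {q1<..<q2}" "V q2 - V q1 = V' \<xi> * (q2 - q1)"
      using mvt_within[OF der, of q1 q2] q eps by auto
    have "integral {\<xi>..q2} F \<ge> 0"
    proof (rule integral_nonneg)
      show "F integrable_on {\<xi>..q2}" using Fint[of \<xi> q2] \<xi> q eps by auto
      fix r assume r: "r \<in> {\<xi>..q2}"
      have "h r > 0" using hpos r \<xi> q eps by auto
      moreover have "f (V r) \<ge> 0" using fnn Vge[of r] r \<xi> q by auto
      ultimately show "0 \<le> F r" unfolding F_def by auto
    qed
    then have "I a q2 \<ge> I a \<xi>" using Ieq[of \<xi> q2] \<xi> q eps by auto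
    then have "phi_p p (V' q2) \<le> phi_p p (V' \<xi>)" using Phi[of q2] Phi[of \<xi>] \<xi> q by auto
    also have "\<dots> = V' \<xi> powr (p - 1)" using PhiV[of \<xi>] \<xi> q by auto
    also have "\<dots> \<le> (4 * Y / \<epsilon>) powr (p - 1)"
    proof (rule powr_mono2)
      show "0 \<le> V' \<xi>" using pos' \<xi> q by (auto intro: less_imp_le)
      have "V' \<xi> = (V q2 - V q1) * 4 / \<epsilon>" using \<xi> eps unfolding q1_def q2_def by (auto simp: field_simps)
      moreover have "V q1 > 0" using Vpos[of q1] q by auto
      ultimately show "V' \<xi> \<le> 4 * Y / \<epsilon>" unfolding Y_def using eps by (auto simp: field_simps)
    qed (use pm1 in auto)
    finally show ?thesis .
  qed
  have YY0: "Y \<le> Y0"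
  proof (rule ccontr)
    assume "\<not> Y \<le> Y0"
    then have YY: "Y > Y0" by simp
    have "integral {q2..\<epsilon>} F \<ge> integral {q2..\<epsilon>} (\<lambda>_. hmin * (Y powr l / 2))"
    proof (rule integral_le)
      show "F integrable_on {q2..\<epsilon>}" using Fint[of q2 \<epsilon>] q eps by auto
      fix r assume r: "r \<in> {q2..\<epsilon>}"
      have Vr: "V r \<ge> Y" using monole[of q2 r] r q unfolding Y_def by auto
      have "f (V r) \<ge> V r powr l / 2" using U1 Vr YY Y0 by auto
      moreover have "V r powr l \<ge> Y powr l" using Vr Y0' l0 by (intro powr_mono2) auto
      ultimately have "f (V r) \<ge> Y powr l / 2" by linarith
      moreover have "hmin \<le> h r" using hmin r unfolding q2_def by auto
      ultimately show "hmin * (Y powr l / 2) \<le> F r" unfolding F_def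
        using hmin(1) by (intro mult_mono) auto
    qed auto
    also have "integral {q2..\<epsilon>} (\<lambda>_. hmin * (Y powr l / 2)) = hmin * (Y powr l / 2) * (\<epsilon>/2)"
      using q unfolding q2_def by simp
    finally have "integral {q2..\<epsilon>} F \<ge> hmin * (Y powr l / 2) * (\<epsilon>/2)" .
    moreover have "I a \<epsilon> = I a q2 + integral {q2..\<epsilon>} F" using Ieq[of q2 \<epsilon>] q eps by auto
    moreover have "phi_p p (V' \<epsilon>) > 0" using phi_pos_iff[OF p] pos eps unfolding V'_def by auto
    moreover have "(4*Y/\<epsilon>) powr (p-1) \<le> hmin * (Y powr l / 2) * (\<epsilon>/2)" using Y0 YY by auto
    ultimately show False using Phi[of \<epsilon>] Phi[of q2] Phiq2 q eps by auto
  qed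
  have "\<forall>s\<in>{0<..q2}. f (V s) \<le> Cf"
  proof
    fix s assume s: "s \<in> {0<..q2}"
    have "0 < V s" using Vpos[of s] s q by auto
    moreover have "V s \<le> Y" using monole[of s q2] s q unfolding Y_def by auto
    ultimately show "f (V s) \<le> Cf" using Cf YY0 by auto
  qed
  then have Iq2: "I a q2 \<le> Cf*Ch*((\<epsilon>/2) powr (\<gamma>+1)/(\<gamma>+1))"
    using lemC[OF a, of q2 Cf] q eps Cf unfolding V_def q2_def by auto
  have "(4 * Y / \<epsilon>) powr (p - 1) \<le> (4 * Y0 / \<epsilon>) powr (p - 1)"
    using YY0 Y0' eps pm1 by (intro powr_mono2) (auto simp: field_simps)
  then show ?thesis using Iq2 Phiq2 Phi[of q2] q by auto
qed

end

context setting
begin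

lemma Y0_exists:
  assumes hmin: "hmin > 0" and eps: "\<epsilon> > 0"
  shows "\<exists>Y0\<ge>U1. Y0 > 0 \<and> (\<forall>Y>Y0. (4*Y/\<epsilon>) powr (p-1) \<le> hmin * (Y powr l / 2) * (\<epsilon>/2))"
proof -
  define k where "k = l - (p - 1)"
  have k: "k > 0" using fbig(1) unfolding k_def by simp
  define D where "D = (4/\<epsilon>) powr (p-1) * 4 / (hmin*\<epsilon>)"
  have D: "D > 0" using hmin eps unfolding D_def by auto
  define Y0 where "Y0 = max (max U1 1) (D powr (1/k))"
  show ?thesis
  proof (intro exI[of _ Y0] conjI allI impI)
    show "U1 \<le> Y0" "Y0 > 0" unfolding Y0_def by auto
    fix Y assume Y: "Y > Y0"
    then have Y1: "Y > 0" "Y > D powr (1/k)" unfolding Y0_def by auto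
    have "Y powr k > (D powr (1/k)) powr k" using Y1 k by (intro powr_less_mono2) auto
    also have "(D powr (1/k)) powr k = D" using D k by (simp add: powr_powr)
    finally have YkD: "Y powr k > D" .
    have "(4*Y/\<epsilon>) powr (p-1) = (4/\<epsilon>) powr (p-1) * Y powr (p-1)"
      using Y1 eps by (simp add: powr_mult[symmetric])
    also have "\<dots> = hmin * \<epsilon> / 4 * D * Y powr (p-1)"
      using hmin eps unfolding D_def by (simp add: field_simps)
    also have "\<dots> \<le> hmin * \<epsilon> / 4 * Y powr k * Y powr (p-1)"
      using YkD hmin eps by (intro mult_right_mono mult_left_mono) auto
    also have "\<dots> = hmin * (Y powr l / 2) * (\<epsilon>/2)"
      using Y1 unfolding k_def by (simp add: powr_add[symmetric] field_simps)
    finally show "(4*Y/\<epsilon>) powr (p-1) \<le> hmin * (Y powr l / 2) * (\<epsilon>/2)" .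
  qed
qed

lemma lemA:
  assumes eps: "0 < \<epsilon>" "\<epsilon> \<le> T"
  shows "\<exists>A. \<forall>a>A. \<exists>t\<in>{0<..\<epsilon>}. v' a t \<le> 0"
proof -
  obtain hmin where hmin: "hmin > 0" "\<forall>t\<in>{\<epsilon>/2..\<epsilon>}. hmin \<le> h t"
    using hlow[of "\<epsilon>/2" \<epsilon>] eps by auto
  obtain U1 where U1: "\<forall>u\<ge>U1. f u \<ge> u powr l / 2" using fbig(2) by auto
  obtain Y0 where Y0: "Y0 \<ge> U1" "Y0 > 0" "\<forall>Y>Y0. (4*Y/\<epsilon>) powr (p-1) \<le> hmin * (Y powr l / 2) * (\<epsilon>/2)"
    using Y0_exists[OF hmin(1) eps(1), of U1] by auto
  obtain Cf where Cf: "Cf \<ge> 0" "\<forall>u\<in>{0<..Y0}. f u \<le> Cf" using fbound[of Y0] by auto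
  define Cst where "Cst = Cf*Ch*((\<epsilon>/2) powr (\<gamma>+1)/(\<gamma>+1)) + (4*Y0/\<epsilon>) powr (p-1)"
  show ?thesis
  proof (intro exI[of _ "max (4*\<beta>/\<epsilon>) (max 0 (\<bar>Cst\<bar> powr (1/(p-1))))"] allI impI)
    fix a assume a: "a > max (4*\<beta>/\<epsilon>) (max 0 (\<bar>Cst\<bar> powr (1/(p-1))))"
    have a0: "a > 0" using a unfolding max_less_iff_conj by blast
    have big: "a powr (p-1) > Cst" using powr_gt_of_gt_root[where q="p-1" and C=Cst and a=a] a p by auto
    show "\<exists>t\<in>{0<..\<epsilon>}. v' a t \<le> 0"
    proof (rule ccontr)
      assume "\<not> (\<exists>t\<in>{0<..\<epsilon>}. v' a t \<le> 0)"
      then have "\<forall>t\<in>{0..\<epsilon>}. v' a t > 0" using v'0[OF a0]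
        by (metis atLeastAtMost_iff greaterThanAtMost_iff linorder_not_le order_le_less)
      from lemA_core[OF a0 eps _ this hmin U1 Y0 Cf] a have "a powr (p-1) \<le> Cst"
        unfolding Cst_def by auto
      then show False using big by auto
    qed
  qed
qed

definition M where "M a = Inf {t\<in>{0..T}. v' a t = 0}"

lemma firstzero:
  assumes a: "a > 0" and t0: "t0 \<in> {0..T}" "v' a t0 \<le> 0"
  shows "0 < M a \<and> M a \<le> t0 \<and> v' a (M a) = 0 \<and> (\<forall>t\<in>{0..<M a}. v' a t > 0)"
proof -
  define Z where "Z = {t\<in>{0..T}. v' a t = 0}"
  have cont: "continuous_on {0..T} (v' a)" using sol_cont[OF a] .
  have zero_below: "\<exists>z\<in>Z. z \<le> t" if tt: "t \<in> {0..T}" "v' a t \<le> 0" for t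
  proof -
    have "continuous_on {0..t} (v' a)" by (rule continuous_on_subset[OF cont]) (use that in auto)
    then obtain z where "0 \<le> z" "z \<le> t" "v' a z = 0"
      using IVT2'[of "v' a" t 0 0] tt v'0[OF a] by (auto simp: less_imp_le)
    then show ?thesis using tt unfolding Z_def by auto
  qed
  obtain z where z: "z \<in> Z" "z \<le> t0" using zero_below[OF t0] by auto
  have closedZ: "closed Z" unfolding Z_def by (rule continuous_closed_preimage_constant[OF cont]) auto
  have bdd: "bdd_below Z" unfolding Z_def by (rule bdd_belowI[of _ 0]) auto
  have MZ: "M a \<in> Z" unfolding M_def Z_def[symmetric] using closed_contains_Inf[OF _ bdd closedZ] z by auto
  have Mle: "M a \<le> z'" if "z' \<in> Z" for z' unfolding M_def Z_def[symmetric] using cInf_lower[OF that bdd] .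
  have "M a \<noteq> 0" using MZ v'0[OF a] unfolding Z_def by auto
  then have M0: "M a > 0" using MZ unfolding Z_def by auto
  moreover have "M a \<le> t0" using Mle[OF z(1)] z(2) by auto
  moreover have "v' a (M a) = 0" using MZ unfolding Z_def by auto
  moreover have "\<forall>t\<in>{0..<M a}. v' a t > 0"
  proof (rule ballI, rule ccontr)
    fix t assume t: "t \<in> {0..<M a}" and "\<not> v' a t > 0"
    moreover have "M a \<le> T" using MZ unfolding Z_def by auto
    ultimately obtain z' where "z' \<in> Z" "z' \<le> t" using zero_below[of t] by auto
    then show False using Mle t by fastforce
  qed
  ultimately show ?thesis by auto
qed

theorem main:
  "\<exists>A. \<exists>M :: real \<Rightarrow> real.
     (\<forall>a>A. 0 < M a \<and> M a < T \<and> v' a (M a) = 0 \<and> (\<forall>t\<in>{0..<M a}. v' a t > 0)) \<and>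
     (M \<longlongrightarrow> 0) at_top \<and> filterlim (\<lambda>a. v a (M a)) at_top at_top"
proof -
  obtain A0 where A0: "\<forall>a>A0. \<exists>t\<in>{0<..T/2}. v' a t \<le> 0" using lemA[of "T/2"] T by auto
  define A where "A = max A0 0"
  have props: "0 < M a \<and> M a \<le> T/2 \<and> v' a (M a) = 0 \<and> (\<forall>t\<in>{0..<M a}. v' a t > 0)" if "a > A" for a
  proof -
    have "a > A0" using that unfolding A_def max_less_iff_conj by blast
    then obtain t0 where "t0 \<in> {0<..T/2}" "v' a t0 \<le> 0" using A0 by blast
    then show ?thesis using firstzero[of a t0] that T unfolding A_def by auto
  qed
  show ?thesis
  proof (intro exI[of _ A] exI[of _ M] conjI)
    show "\<forall>a>A. 0 < M a \<and> M a < T \<and> v' a (M a) = 0 \<and> (\<forall>t\<in>{0..<M a}. v' a t > 0)"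
      using props T by fastforce
  next
    show "(M \<longlongrightarrow> 0) at_top"
    proof (rule tendstoI)
      fix e :: real assume e: "e > 0"
      obtain Ae where Ae: "\<forall>a>Ae. \<exists>t\<in>{0<..min (e/2) (T/2)}. v' a t \<le> 0"
        using lemA[of "min (e/2) (T/2)"] T e min.coboundedI2[of "T/2" T "e/2"] by auto
      have "eventually (\<lambda>a. a > max Ae A) at_top" by (rule eventually_gt_at_top)
      then show "eventually (\<lambda>a. dist (M a) 0 < e) at_top"
      proof (rule eventually_mono)
        fix a assume a: "a > max Ae A"
        obtain t0 where t0: "t0 \<in> {0<..min (e/2) (T/2)}" "v' a t0 \<le> 0" using Ae a by auto
        have "M a \<le> t0" using firstzero[of a t0] t0 a T unfolding A_def by auto
        moreover have "M a > 0" using props[of a] a by auto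
        ultimately show "dist (M a) 0 < e" using t0 e by auto
      qed
    qed
  next
    show "filterlim (\<lambda>a. v a (M a)) at_top at_top"
      unfolding filterlim_at_top
    proof
      fix Z :: real
      obtain Cf where Cf: "Cf \<ge> 0" "\<forall>u\<in>{0<..Z}. f u \<le> Cf" using fbound[of Z] by auto
      define Cst where "Cst = Cf * Ch * (T powr (\<gamma> + 1) / (\<gamma> + 1))"
      have "eventually (\<lambda>a. a > max A (max 0 (\<bar>Cst\<bar> powr (1/(p-1))))) at_top" by (rule eventually_gt_at_top)
      then show "eventually (\<lambda>a. Z \<le> v a (M a)) at_top"
      proof (rule eventually_mono)
        fix a assume a: "a > max A (max 0 (\<bar>Cst\<bar> powr (1/(p-1))))"
        have big: "a powr (p-1) > Cst" using powr_gt_of_gt_root[where q="p-1" and C=Cst and a=a] a p by auto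
        have a0: "a > 0" using a unfolding A_def by auto
        show "Z \<le> v a (M a)"
        proof (rule ccontr)
          assume "\<not> Z \<le> v a (M a)"
          then have "v a (M a) \<le> Z" by simp
          then have "a powr (p - 1) \<le> Cst"
            using lemB[OF a0 _ _ _ _ Cf] props[of a] a T unfolding Cst_def A_def by auto
          then show False using big by auto
        qed
      qed
    qed
  qed
qed

end

lemma loc_lip_cont:
  assumes "loc_lipschitz_on S g"
  shows "continuous_on S g"
  unfolding continuous_on_iff
proof (intro ballI allI impI)
  fix x e :: real assume x: "x \<in> S" and e: "e > 0"
  obtain d L where d: "d > 0" and L: "\<forall>y\<in>ball x d \<inter> S. \<forall>z\<in>ball x d \<inter> S. \<bar>g y - g z\<bar> \<le> L * \<bar>y - z\<bar>"
    using assms x unfolding loc_lipschitz_on_def by blast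
  show "\<exists>d>0. \<forall>x'\<in>S. dist x' x < d \<longrightarrow> dist (g x') (g x) < e"
  proof (intro exI[of _ "min d (e / (\<bar>L\<bar> + 1))"] conjI ballI impI)
    show "0 < min d (e / (\<bar>L\<bar> + 1))" using d e by auto
    fix y assume y: "y \<in> S" "dist y x < min d (e / (\<bar>L\<bar> + 1))"
    have "y \<in> ball x d \<inter> S" "x \<in> ball x d \<inter> S" using y x d by (auto simp: dist_commute)
    then have "\<bar>g y - g x\<bar> \<le> L * \<bar>y - x\<bar>" using L by blast
    also have "\<dots> \<le> \<bar>L\<bar> * \<bar>y - x\<bar>" by (intro mult_right_mono) auto
    also have "\<dots> \<le> \<bar>L\<bar> * (e / (\<bar>L\<bar> + 1))"
      using y by (intro mult_left_mono) (auto simp: dist_real_def)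
    also have "\<dots> < e" using e by (simp add: field_simps)
    finally show "dist (g y) (g x) < e" by (simp add: dist_real_def)
  qed
qed

lemma r_ge_R:
  fixes p R t :: real and N :: nat
  assumes "1 < p" "p < real N" "R > 0" "0 < t" "t \<le> R powr ((p - real N) / (p - 1))"
  shows "t powr ((p - 1) / (p - real N)) \<ge> R"
proof -
  have k: "(p - 1) / (p - real N) \<le> 0" using assms by (simp add: divide_nonneg_neg)
  have "(R powr ((p - real N) / (p - 1))) powr ((p - 1) / (p - real N)) \<le> t powr ((p - 1) / (p - real N))"
    by (rule powr_mono2'[OF k assms(4,5)])
  moreover have "(R powr ((p - real N) / (p - 1))) powr ((p - 1) / (p - real N)) = R"
    using assms by (simp add: powr_powr)
  ultimately show ?thesis by simp
qed

lemma h_upper: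
  fixes p R t K1 \<alpha>1 :: real and N :: nat and K :: "real \<Rightarrow> real"
  assumes "1 < p" "p < real N" "R > 0" "0 < t" "t \<le> R powr ((p - real N) / (p - 1))"
    and Kb: "\<forall>r\<in>{R..}. K r \<le> K1 / r powr \<alpha>1"
  shows "hfun N p K t \<le> (((real N - p) / (p - 1)) powr (- p) * K1) *
           t powr ((p * (real N - 1) - \<alpha>1 * (p - 1)) / (p - real N))"
proof -
  define k where "k = (p - 1) / (p - real N)"
  define e where "e = p * (real N - 1) / (p - real N)"
  define c where "c = ((real N - p) / (p - 1)) powr (- p)"
  have c: "c > 0" using assms unfolding c_def by auto
  have r: "t powr k \<ge> R" using r_ge_R[OF assms(1-5)] unfolding k_def .
  have "hfun N p K t = c * t powr e * K (t powr k)" unfolding hfun_def c_def e_def k_def ..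
  also have "\<dots> \<le> c * t powr e * (K1 / (t powr k) powr \<alpha>1)"
    using Kb r c by (intro mult_left_mono) auto
  also have "(t powr k) powr \<alpha>1 = t powr (k * \<alpha>1)" by (simp add: powr_powr)
  also have "c * t powr e * (K1 / t powr (k * \<alpha>1)) = (c * K1) * (t powr e / t powr (k * \<alpha>1))" by simp
  also have "t powr e / t powr (k * \<alpha>1) = t powr (e - k * \<alpha>1)" by (simp add: powr_diff)
  also have "e - k * \<alpha>1 = (p * (real N - 1) - \<alpha>1 * (p - 1)) / (p - real N)"
  proof -
    have nz: "p - real N \<noteq> 0" using assms by simp
    have A: "(p - 1) / (p - real N) * \<alpha>1 = (\<alpha>1 * (p - 1)) / (p - real N)" by simp
    show ?thesis unfolding e_def k_def A by (simp only: diff_divide_distrib)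
  qed
  finally show ?thesis unfolding c_def .
qed

lemma h_lower_fun:
  fixes p R t K0 \<alpha> :: real and N :: nat and K :: "real \<Rightarrow> real"
  assumes "1 < p" "p < real N" "R > 0" "0 < t" "t \<le> R powr ((p - real N) / (p - 1))"
    and Kb: "\<forall>r\<in>{R..}. K0 / r powr \<alpha> \<le> K r"
  shows "hfun N p K t \<ge> ((real N - p) / (p - 1)) powr (- p) * t powr (p * (real N - 1) / (p - real N))
           * (K0 / (t powr ((p - 1) / (p - real N))) powr \<alpha>)"
proof -
  have r: "t powr ((p - 1) / (p - real N)) \<ge> R" using r_ge_R[OF assms(1-5)] .
  show ?thesis unfolding hfun_def using Kb r by (intro mult_left_mono) auto
qed


theorem lemma2p5:
  fixes N :: nat and p l m \<beta> R K0 K1 \<alpha> \<alpha>1 :: real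
    and f g1 g2 K K' :: "real \<Rightarrow> real"
    and v v' :: "real \<Rightarrow> real \<Rightarrow> real"
  assumes N: "N > 2" and p: "1 < p" "p < real N"
    and f_odd: "\<forall>u. u \<noteq> 0 \<longrightarrow> f (- u) = - f u"
    and f_lip: "loc_lipschitz_on (- {0}) f"
    and H1: "loc_lipschitz_on UNIV g1" "l > p - 1"
      "\<exists>U. \<forall>u. \<bar>u\<bar> \<ge> U \<longrightarrow> f u = \<bar>u\<bar> powr (l - 1) * u + g1 u"
      "((\<lambda>u. \<bar>g1 u\<bar> / \<bar>u\<bar> powr l) \<longlongrightarrow> 0) at_top"
    and H2: "loc_lipschitz_on UNIV g2" "g2 0 = 0" "0 < m" "m < 1"
      "\<exists>\<delta>>0. \<forall>u. 0 < \<bar>u\<bar> \<and> \<bar>u\<bar> < \<delta> \<longrightarrow> f u = - 1 / (\<bar>u\<bar> powr (m - 1) * u) + g2 u"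
    and H3: "\<beta> > 0" "f \<beta> = 0" "\<forall>u>0. f u = 0 \<longrightarrow> u = \<beta>"
      "\<forall>u. 0 < u \<and> u < \<beta> \<longrightarrow> f u < 0" "\<forall>u>\<beta>. f u > 0"
    and H4: "R > 0" "continuous_on {R..} K" "continuous_on {R..} K'"
      "\<forall>r\<in>{R..}. (K has_real_derivative K' r) (at r within {R..})"
      "\<forall>r\<in>{R..}. K r > 0"
      "\<forall>r\<in>{R..}. r * K' r / K r > - (real N - 1) * p / (p - 1)"
      "K0 > 0" "K1 > 0"
      "\<forall>r\<in>{R..}. K0 / r powr \<alpha> \<le> K r \<and> K r \<le> K1 / r powr \<alpha>1"
      "real N + m * (real N - p) / (p - 1) < \<alpha>1" "\<alpha>1 \<le> \<alpha>" "\<alpha> < 2 * (real N - 1)"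
    and sol: "\<forall>a>0. is_solution (hfun N p K) f p a (R powr ((p - real N) / (p - 1))) (v a) (v' a)"
  shows "\<exists>A. \<exists>M :: real \<Rightarrow> real.
           (\<forall>a>A. 0 < M a \<and> M a < R powr ((p - real N) / (p - 1)) \<and> v' a (M a) = 0 \<and>
                   (\<forall>t\<in>{0..<M a}. v' a t > 0)) \<and>
           (M \<longlongrightarrow> 0) at_top \<and>
           filterlim (\<lambda>a. v a (M a)) at_top at_top"
proof -
  define T where "T = R powr ((p - real N) / (p - 1))"
  have T0: "T > 0" using H4(1) unfolding T_def by simp
  define c0 where "c0 = ((real N - p) / (p - 1)) powr (- p)"
  have c0: "c0 > 0" using p unfolding c0_def by simp
  define \<gamma> where "\<gamma> = (p * (real N - 1) - \<alpha>1 * (p - 1)) / (p - real N)"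
  define Ch where "Ch = c0 * K1"
  have Ch: "Ch > 0" using c0 H4(8) unfolding Ch_def by simp
  have \<alpha>1N: "\<alpha>1 > real N"
  proof -
    have "m * (real N - p) / (p - 1) > 0" using H2(3) p by simp
    then show ?thesis using H4(10) by linarith
  qed
  have \<gamma>: "\<gamma> > -1"
  proof -
    have "\<alpha>1 * (p - 1) > real N * (p - 1)" using \<alpha>1N p by (intro mult_strict_right_mono) auto
    then have "p * (real N - 1) - \<alpha>1 * (p - 1) < (-1) * (p - real N)" by (simp add: algebra_simps)
    then show ?thesis unfolding \<gamma>_def using p by (subst neg_less_divide_eq) auto
  qed
  have hup: "\<forall>t\<in>{0<..T}. hfun N p K t \<le> Ch * t powr \<gamma>"
    using h_upper[OF p H4(1) _ _ ] H4(9) unfolding T_def Ch_def \<gamma>_def c0_def by auto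
  have hpos: "\<forall>t\<in>{0<..T}. hfun N p K t > 0"
  proof
    fix t assume t: "t \<in> {0<..T}"
    have "t powr ((p - 1) / (p - real N)) \<ge> R" using r_ge_R[OF p H4(1)] t unfolding T_def by auto
    then have "K (t powr ((p - 1) / (p - real N))) > 0" using H4(5) by auto
    then show "hfun N p K t > 0" unfolding hfun_def using p t by simp
  qed
  have h0: "hfun N p K 0 = 0" unfolding hfun_def by simp
  have hlow: "\<exists>c>0. \<forall>t\<in>{x..y}. c \<le> hfun N p K t" if xy: "0 < x" "x \<le> y" "y \<le> T" for x y
  proof -
    define g where "g = (\<lambda>t. c0 * t powr (p * (real N - 1) / (p - real N))
           * (K0 / (t powr ((p - 1) / (p - real N))) powr \<alpha>))"
    have "continuous_on {x..y} g" unfolding g_def using xy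
      by (intro continuous_intros) auto
    then obtain t0 where t0: "t0 \<in> {x..y}" "\<forall>t\<in>{x..y}. g t0 \<le> g t"
      using continuous_attains_inf[of "{x..y}" g] xy by auto
    have "g t0 > 0" unfolding g_def using t0 xy c0 H4(7) by auto
    moreover have "g t \<le> hfun N p K t" if "t \<in> {x..y}" for t
      using h_lower_fun[OF p H4(1), of t K0 \<alpha> K] H4(9) that xy unfolding g_def c0_def T_def by auto
    ultimately show ?thesis using t0 by (intro exI[of _ "g t0"]) force
  qed
  have fcont: "continuous_on {0<..} f"
    by (rule continuous_on_subset[OF loc_lip_cont[OF f_lip]]) auto
  have fbig: "\<exists>U. \<forall>u\<ge>U. f u \<ge> u powr l / 2"
  proof -
    obtain U where U: "\<forall>u. \<bar>u\<bar> \<ge> U \<longrightarrow> f u = \<bar>u\<bar> powr (l - 1) * u + g1 u" using H1(3) by auto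
    have "eventually (\<lambda>u. \<bar>g1 u\<bar> / \<bar>u\<bar> powr l < 1/2) at_top"
      using order_tendstoD(2)[OF H1(4), of "1/2"] by simp
    then obtain U2 where U2: "\<forall>u\<ge>U2. \<bar>g1 u\<bar> / \<bar>u\<bar> powr l < 1/2"
      unfolding eventually_at_top_linorder by auto
    show ?thesis
    proof (intro exI[of _ "max (max U U2) 1"] allI impI)
      fix u assume u: "max (max U U2) 1 \<le> u"
      then have u0: "u > 0" "\<bar>u\<bar> \<ge> U" "u \<ge> U2" by auto
      have pl: "u powr l > 0" using u0 by simp
      have "\<bar>u\<bar> powr (l - 1) * u = u powr (l - 1) * u powr 1" using u0 by simp
      also have "\<dots> = u powr (l - 1 + 1)" by (rule powr_add[symmetric])
      also have "\<dots> = u powr l" by simp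
      finally have e1: "\<bar>u\<bar> powr (l - 1) * u = u powr l" .
      have "\<bar>g1 u\<bar> / u powr l < 1/2" using U2 u0 by auto
      then have "\<bar>g1 u\<bar> < u powr l / 2" using pl by (simp add: divide_less_eq)
      then show "f u \<ge> u powr l / 2" using U u0 e1 by auto
    qed
  qed
  have sol': "\<forall>a>0. is_solution (hfun N p K) f p a T (v a) (v' a)" using sol unfolding T_def .
  interpret S: setting p l \<beta> T Ch \<gamma> "hfun N p K" f v v'
    by (rule setting.intro[OF p(1) T0 h0 hpos Ch \<gamma> hup hlow H3(1) H3(2) H3(4) H3(5) fcont H1(2) fbig sol'])
  show ?thesis using S.main unfolding T_def .
qed

end
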